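(* Let $n\ge 2$. Then $\Gamma^0=\mathrm{C}^\times$, and $$\Gamma^n=\begin{cases}\mathrm{C}^\times, & n \text{ odd},\\ \mathrm{C}^{\times(0)}\cup\mathrm{C}^{\times(1)}, & n\text{ even}.\end{cases}$$
   Context: Let $\mathrm{C}$ be either the real Clifford algebra $C\ell_{p,q}$ with $p+q=n$, or the complex Clifford algebra $C\ell(\mathbb{C}^n)$. It has identity $e$ and generators $e_1,\dots,e_n$ satisfying $e_ae_b+e_be_a=2\eta_{ab}e$. In the real case $\eta=\mathrm{diag}(1,\dots,1,-1,\dots,-1)$ with $p$ entries $+1$ and $q$ entries $-1$. In the complex case $\eta=I_n$. For $a_1<\dots<a_k$ write $e_{a_1\dots a_k}=e_{a_1}\cdots e_{a_k}$. $\mathrm{C}^k$ (grade $k$, $0\le k\le n$) is the span of the $e_{a_1\dots a_k}$ with $k$ indices; $\mathrm{C}^0=\mathrm{span}(e)$. The even subspace is $\mathrm{C}^{(0)}=\bigoplus_{k\text{ even}}\mathrm{C}^k$ and the odd subspace is $\mathrm{C}^{(1)}=\bigoplus_{k\text{ odd}}\mathrm{C}^k$. For any subset $S\subseteq\mathrm{C}$, $S^\times$ denotes the set of elements of $S$ invertible in $\mathrm{C}$; in particular $\mathrm{C}^{\times(j)}:=(\mathrm{C}^{(j)})^\times$. For $k=0,\dots,n$ define $\Gamma^k=\{T\in\mathrm{C}^\times: T\,\mathrm{C}^k\,T^{-1}\subseteq\mathrm{C}^k\}$. *)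

theory Defs
  imports Complex_Main
begin

text \<open>Clifford algebra on generators e_0,...,e_{n-1} with metric signs eta i.
  An element is represented by its coefficient function on index sets
  (blades): x A is the coefficient of e_A, and x A = 0 unless A is a subset of {..<n}.\<close>

definition cl_carrier :: "nat \<Rightarrow> (nat set \<Rightarrow> 'a::field) set" where
  "cl_carrier n = {x. \<forall>A. \<not> A \<subseteq> {..<n} \<longrightarrow> x A = 0}"

text \<open>e_A e_B = (-1)^{#{(a,b) in A x B. b < a}} (prod_{i in A cap B} eta i) e_{A symdiff B}\<close>
definition blade_coeff :: "(nat \<Rightarrow> 'a::field) \<Rightarrow> nat set \<Rightarrow> nat set \<Rightarrow> 'a" where
  "blade_coeff eta A B =
     (-1) ^ card {(a,b). a \<in> A \<and> b \<in> B \<and> b < a} * (\<Prod>i\<in>A \<inter> B. eta i)"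

definition cl_mult :: "(nat \<Rightarrow> 'a::field) \<Rightarrow> nat \<Rightarrow> (nat set \<Rightarrow> 'a) \<Rightarrow> (nat set \<Rightarrow> 'a) \<Rightarrow> (nat set \<Rightarrow> 'a)" where
  "cl_mult eta n x y = (\<lambda>C. \<Sum>A\<in>Pow {..<n}. \<Sum>B\<in>Pow {..<n}.
      if (A - B) \<union> (B - A) = C then x A * y B * blade_coeff eta A B else 0)"

definition cl_one :: "nat set \<Rightarrow> 'a::field" where
  "cl_one = (\<lambda>A. if A = {} then 1 else 0)"

definition cl_is_inverse :: "(nat \<Rightarrow> 'a::field) \<Rightarrow> nat \<Rightarrow> (nat set \<Rightarrow> 'a) \<Rightarrow> (nat set \<Rightarrow> 'a) \<Rightarrow> bool" where
  "cl_is_inverse eta n x y \<longleftrightarrow> y \<in> cl_carrier n \<and> cl_mult eta n x y = cl_one \<and> cl_mult eta n y x = cl_one"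

definition cl_units :: "(nat \<Rightarrow> 'a::field) \<Rightarrow> nat \<Rightarrow> (nat set \<Rightarrow> 'a) set \<Rightarrow> (nat set \<Rightarrow> 'a) set" where
  "cl_units eta n S = {x \<in> S. \<exists>y. cl_is_inverse eta n x y}"

definition cl_grade :: "nat \<Rightarrow> nat \<Rightarrow> (nat set \<Rightarrow> 'a::field) set" where
  "cl_grade n k = {x \<in> cl_carrier n. \<forall>A. card A \<noteq> k \<longrightarrow> x A = 0}"

definition cl_even :: "nat \<Rightarrow> (nat set \<Rightarrow> 'a::field) set" where
  "cl_even n = {x \<in> cl_carrier n. \<forall>A. odd (card A) \<longrightarrow> x A = 0}"

definition cl_odd :: "nat \<Rightarrow> (nat set \<Rightarrow> 'a::field) set" where
  "cl_odd n = {x \<in> cl_carrier n. \<forall>A. even (card A) \<longrightarrow> x A = 0}"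

definition cl_Gamma :: "(nat \<Rightarrow> 'a::field) \<Rightarrow> nat \<Rightarrow> nat \<Rightarrow> (nat set \<Rightarrow> 'a) set" where
  "cl_Gamma eta n k = {T \<in> cl_units eta n (cl_carrier n).
     \<forall>S. cl_is_inverse eta n T S \<longrightarrow>
        (\<forall>X \<in> cl_grade n k. cl_mult eta n (cl_mult eta n T X) S \<in> cl_grade n k)}"

text \<open>real signature (p,q): first p generators square to +1, the remaining q to -1\<close>
definition eta_real :: "nat \<Rightarrow> nat \<Rightarrow> real" where
  "eta_real p i = (if i < p then 1 else -1)"

definition eta_complex :: "nat \<Rightarrow> complex" where
  "eta_complex i = 1"

end

theory Submission
  imports Defs
begin

definition sd :: "nat set \<Rightarrow> nat set \<Rightarrow> nat set" where "sd A B = (A - B) \<union> (B - A)"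
definition invc :: "nat set \<Rightarrow> nat set \<Rightarrow> nat" where
  "invc A B = card {(a,b). a \<in> A \<and> b \<in> B \<and> b < a}"

lemma bc_def2: "blade_coeff eta A B = (-1) ^ invc A B * (\<Prod>i\<in>A \<inter> B. eta i)"
  by (simp add: blade_coeff_def invc_def)

lemma pairs_fin: "finite A \<Longrightarrow> finite B \<Longrightarrow> finite {(a,b). a \<in> A \<and> b \<in> B \<and> (b::nat) < a}"
  by (rule finite_subset[of _ "A \<times> B"]) auto

lemma pairs_fin2: "finite A \<Longrightarrow> finite B \<Longrightarrow> finite {(a,b). a \<in> A \<and> b \<in> B \<and> (a::nat) < b}"
  by (rule finite_subset[of _ "A \<times> B"]) auto

lemma invc_un1: assumes "finite A" "finite B" "finite C"
  shows "invc (A \<union> B) C + invc (A \<inter> B) C = invc A C + invc B C"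
proof -
  have e1: "{(a,b). a \<in> A \<union> B \<and> b \<in> C \<and> b < a} = {(a,b). a \<in> A \<and> b \<in> C \<and> b < a} \<union> {(a,b). a \<in> B \<and> b \<in> C \<and> b < a}" by auto
  have e2: "{(a,b). a \<in> A \<inter> B \<and> b \<in> C \<and> b < a} = {(a,b). a \<in> A \<and> b \<in> C \<and> b < a} \<inter> {(a,b). a \<in> B \<and> b \<in> C \<and> b < a}" by auto
  show ?thesis unfolding invc_def e1 e2
    by (subst card_Un_Int[symmetric]) (auto intro: pairs_fin assms)
qed

lemma invc_disj1: assumes "finite A" "finite B" "finite C" "A \<inter> B = {}"
  shows "invc (A \<union> B) C = invc A C + invc B C"
proof -
  have e1: "{(a,b). a \<in> A \<union> B \<and> b \<in> C \<and> b < a} = {(a,b). a \<in> A \<and> b \<in> C \<and> b < a} \<union> {(a,b). a \<in> B \<and> b \<in> C \<and> b < a}" by auto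
  show ?thesis unfolding invc_def e1
    by (rule card_Un_disjoint) (use assms in \<open>auto intro: pairs_fin\<close>)
qed

lemma invc_un2: assumes "finite A" "finite B" "finite C"
  shows "invc C (A \<union> B) + invc C (A \<inter> B) = invc C A + invc C B"
proof -
  have e1: "{(a,b). a \<in> C \<and> b \<in> A \<union> B \<and> b < a} = {(a,b). a \<in> C \<and> b \<in> A \<and> b < a} \<union> {(a,b). a \<in> C \<and> b \<in> B \<and> b < a}" by auto
  have e2: "{(a,b). a \<in> C \<and> b \<in> A \<inter> B \<and> b < a} = {(a,b). a \<in> C \<and> b \<in> A \<and> b < a} \<inter> {(a,b). a \<in> C \<and> b \<in> B \<and> b < a}" by auto
  show ?thesis unfolding invc_def e1 e2
    by (subst card_Un_Int[symmetric]) (auto intro: pairs_fin assms)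
qed

lemma invc_disj2: assumes "finite A" "finite B" "finite C" "A \<inter> B = {}"
  shows "invc C (A \<union> B) = invc C A + invc C B"
proof -
  have e1: "{(a,b). a \<in> C \<and> b \<in> A \<union> B \<and> b < a} = {(a,b). a \<in> C \<and> b \<in> A \<and> b < a} \<union> {(a,b). a \<in> C \<and> b \<in> B \<and> b < a}" by auto
  show ?thesis unfolding invc_def e1
    by (rule card_Un_disjoint) (use assms in \<open>auto intro: pairs_fin\<close>)
qed

lemma invc_sd1: assumes "finite A" "finite B" "finite C"
  shows "invc (sd A B) C + 2 * invc (A \<inter> B) C = invc A C + invc B C"
proof -
  have "A \<union> B = sd A B \<union> (A \<inter> B)" "sd A B \<inter> (A \<inter> B) = {}" by (auto simp: sd_def)
  hence "invc (A \<union> B) C = invc (sd A B) C + invc (A \<inter> B) C"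
    using invc_disj1[of "sd A B" "A \<inter> B" C] assms by (simp add: sd_def)
  with invc_un1[OF assms] show ?thesis by simp
qed

lemma invc_sd2: assumes "finite A" "finite B" "finite C"
  shows "invc C (sd A B) + 2 * invc C (A \<inter> B) = invc C A + invc C B"
proof -
  have "A \<union> B = sd A B \<union> (A \<inter> B)" "sd A B \<inter> (A \<inter> B) = {}" by (auto simp: sd_def)
  hence "invc C (A \<union> B) = invc C (sd A B) + invc C (A \<inter> B)"
    using invc_disj2[of "sd A B" "A \<inter> B" C] assms by (simp add: sd_def)
  with invc_un2[OF assms] show ?thesis by simp
qed

lemma cocycle: assumes "finite A" "finite B" "finite E"
  shows "blade_coeff eta A B * blade_coeff eta (sd A B) E = blade_coeff eta A (sd B E) * blade_coeff eta B E"
proof -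
  define x where "x = invc (A \<inter> B) E"
  define y where "y = invc A (B \<inter> E)"
  have h1: "invc (sd A B) E + 2 * x = invc A E + invc B E" using invc_sd1[OF assms] x_def by simp
  have h2: "invc A (sd B E) + 2 * y = invc A B + invc A E" using invc_sd2[OF assms(2,3,1)] y_def by simp
  have s: "invc A B + invc (sd A B) E + 2 * x = invc A (sd B E) + invc B E + 2 * y" using h1 h2 by simp
  have sg: "(-1::'a) ^ (invc A B + invc (sd A B) E) = (-1) ^ (invc A (sd B E) + invc B E)"
  proof -
    have "(-1::'a) ^ (invc A B + invc (sd A B) E) = (-1) ^ (invc A B + invc (sd A B) E + 2 * x)"
      by (simp add: power_add power_mult)
    also have "\<dots> = (-1) ^ (invc A (sd B E) + invc B E + 2 * y)" using s by simp
    also have "\<dots> = (-1) ^ (invc A (sd B E) + invc B E)" by (simp add: power_add power_mult)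
    finally show ?thesis .
  qed
  define M where "M = (A \<inter> B) \<union> (A \<inter> E) \<union> (B \<inter> E)"
  have p1: "(\<Prod>i\<in>A \<inter> B. eta i) * (\<Prod>i\<in>sd A B \<inter> E. eta i) = (\<Prod>i\<in>M. eta i)"
  proof -
    have "M = (A \<inter> B) \<union> (sd A B \<inter> E)" "(A \<inter> B) \<inter> (sd A B \<inter> E) = {}" by (auto simp: M_def sd_def)
    thus ?thesis using assms by (simp add: prod.union_disjoint)
  qed
  have p2: "(\<Prod>i\<in>A \<inter> sd B E. eta i) * (\<Prod>i\<in>B \<inter> E. eta i) = (\<Prod>i\<in>M. eta i)"
  proof -
    have "M = (A \<inter> sd B E) \<union> (B \<inter> E)" "(A \<inter> sd B E) \<inter> (B \<inter> E) = {}" by (auto simp: M_def sd_def)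
    thus ?thesis using assms by (simp add: prod.union_disjoint)
  qed
  have "blade_coeff eta A B * blade_coeff eta (sd A B) E
      = (-1::'a) ^ (invc A B + invc (sd A B) E) * ((\<Prod>i\<in>A \<inter> B. eta i) * (\<Prod>i\<in>sd A B \<inter> E. eta i))"
    by (simp add: bc_def2 power_add mult_ac)
  also have "\<dots> = (-1) ^ (invc A (sd B E) + invc B E) * ((\<Prod>i\<in>A \<inter> sd B E. eta i) * (\<Prod>i\<in>B \<inter> E. eta i))"
    using sg p1 p2 by simp
  also have "\<dots> = blade_coeff eta A (sd B E) * blade_coeff eta B E"
    by (simp add: bc_def2 power_add mult_ac)
  finally show ?thesis .
qed

lemma sd_sd: "sd A (sd A B) = B" by (auto simp: sd_def)
lemma sd_eq_iff: "(sd A B = C) = (B = sd A C)" by (auto simp: sd_def)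
lemma sd_sub: "A \<subseteq> U \<Longrightarrow> B \<subseteq> U \<Longrightarrow> sd A B \<subseteq> U" by (auto simp: sd_def)

lemma cl_mult_sd: "cl_mult eta n x y = (\<lambda>C. \<Sum>A\<in>Pow {..<n}. \<Sum>B\<in>Pow {..<n}.
      if sd A B = C then x A * y B * blade_coeff eta A B else 0)"
  by (simp add: cl_mult_def sd_def)

lemma cl_mult_alt: assumes "C \<subseteq> {..<n}"
  shows "cl_mult eta n x y C = (\<Sum>A\<in>Pow {..<n}. x A * y (sd A C) * blade_coeff eta A (sd A C))"
  unfolding cl_mult_sd
proof (rule sum.cong[OF refl])
  fix A assume "A \<in> Pow {..<n}"
  hence "sd A C \<in> Pow {..<n}" using assms by (auto simp: sd_def)
  thus "(\<Sum>B\<in>Pow {..<n}. if sd A B = C then x A * y B * blade_coeff eta A B else 0) =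
        x A * y (sd A C) * blade_coeff eta A (sd A C)"
    by (simp add: sd_eq_iff)
qed

lemma cl_mult_out: "\<not> C \<subseteq> {..<n} \<Longrightarrow> cl_mult eta n x y C = 0"
  unfolding cl_mult_sd by (auto intro!: sum.neutral simp: sd_def)

lemma cl_mult_carrier: "cl_mult eta n x y \<in> cl_carrier n"
  by (simp add: cl_carrier_def cl_mult_out)

lemma cl_mult_assoc: "cl_mult eta n x (cl_mult eta n y z) = cl_mult eta n (cl_mult eta n x y) z"
proof (rule ext)
  fix C
  let ?U = "{..<n}"
  let ?b = "blade_coeff eta"
  show "cl_mult eta n x (cl_mult eta n y z) C = cl_mult eta n (cl_mult eta n x y) z C"
  proof (cases "C \<subseteq> ?U")
    case False thus ?thesis by (simp add: cl_mult_out)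
  next
    case True
    have "cl_mult eta n x (cl_mult eta n y z) C
       = (\<Sum>A\<in>Pow ?U. \<Sum>B\<in>Pow ?U. x A * y B * z (sd B (sd A C)) * ?b B (sd B (sd A C)) * ?b A (sd A C))"
    proof (subst cl_mult_alt[OF True], rule sum.cong[OF refl])
      fix A assume "A \<in> Pow ?U"
      hence "sd A C \<subseteq> ?U" using True by (auto simp: sd_def)
      thus "x A * cl_mult eta n y z (sd A C) * ?b A (sd A C) =
         (\<Sum>B\<in>Pow ?U. x A * y B * z (sd B (sd A C)) * ?b B (sd B (sd A C)) * ?b A (sd A C))"
        by (simp add: cl_mult_alt sum_distrib_left sum_distrib_right mult_ac)
    qed
    also have "\<dots> = (\<Sum>A\<in>Pow ?U. \<Sum>B\<in>Pow ?U. x A * y B * z (sd (sd A B) C) * ?b A B * ?b (sd A B) (sd (sd A B) C))"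
    proof (intro sum.cong refl)
      fix A B assume "A \<in> Pow ?U" "B \<in> Pow ?U"
      have e: "sd B (sd A C) = sd (sd A B) C" by (auto simp: sd_def)
      have e2: "sd A C = sd B (sd (sd A B) C)" by (auto simp: sd_def)
      have fin: "finite A" "finite B" "finite (sd (sd A B) C)"
        using \<open>A \<in> Pow ?U\<close> \<open>B \<in> Pow ?U\<close> True by (auto intro: finite_subset simp: sd_def)
      have "?b B (sd B (sd A C)) * ?b A (sd A C) = ?b A B * ?b (sd A B) (sd (sd A B) C)"
        using cocycle[OF fin, of eta] e e2 by (simp add: mult_ac)
      thus "x A * y B * z (sd B (sd A C)) * ?b B (sd B (sd A C)) * ?b A (sd A C) =
         x A * y B * z (sd (sd A B) C) * ?b A B * ?b (sd A B) (sd (sd A B) C)"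
        using e by (simp add: mult_ac)
    qed
    also have "\<dots> = (\<Sum>A\<in>Pow ?U. \<Sum>D\<in>Pow ?U. x A * y (sd A D) * z (sd D C) * ?b A (sd A D) * ?b D (sd D C))"
    proof (rule sum.cong[OF refl])
      fix A assume A: "A \<in> Pow ?U"
      show "(\<Sum>B\<in>Pow ?U. x A * y B * z (sd (sd A B) C) * ?b A B * ?b (sd A B) (sd (sd A B) C)) =
            (\<Sum>D\<in>Pow ?U. x A * y (sd A D) * z (sd D C) * ?b A (sd A D) * ?b D (sd D C))"
        by (rule sum.reindex_bij_witness[of _ "\<lambda>B. sd A B" "\<lambda>B. sd A B"])
           (use A in \<open>auto simp: sd_sd dest: sd_sub[THEN subsetD, rotated 2]\<close>)
    qed
    also have "\<dots> = (\<Sum>D\<in>Pow ?U. \<Sum>A\<in>Pow ?U. x A * y (sd A D) * z (sd D C) * ?b A (sd A D) * ?b D (sd D C))"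
      by (rule sum.swap)
    also have "\<dots> = cl_mult eta n (cl_mult eta n x y) z C"
    proof (subst cl_mult_alt[OF True], rule sum.cong[OF refl])
      fix D assume "D \<in> Pow ?U"
      thus "(\<Sum>A\<in>Pow ?U. x A * y (sd A D) * z (sd D C) * ?b A (sd A D) * ?b D (sd D C)) =
         cl_mult eta n x y D * z (sd D C) * ?b D (sd D C)"
        by (simp add: cl_mult_alt sum_distrib_left sum_distrib_right mult_ac)
    qed
    finally show ?thesis .
  qed
qed

lemma bc_empty1: "blade_coeff eta {} B = 1" by (simp add: blade_coeff_def)
lemma bc_empty2: "blade_coeff eta B {} = 1" by (simp add: blade_coeff_def)

lemma cl_mult_one_right: assumes "x \<in> cl_carrier n" shows "cl_mult eta n x cl_one = x"
proof (rule ext)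
  fix C show "cl_mult eta n x cl_one C = x C"
  proof (cases "C \<subseteq> {..<n}")
    case False thus ?thesis using assms by (simp add: cl_mult_out cl_carrier_def)
  next
    case True
    have "cl_mult eta n x cl_one C = (\<Sum>A\<in>Pow {..<n}. if A = C then x A else 0)"
      by (subst cl_mult_alt[OF True], rule sum.cong) (auto simp: cl_one_def sd_def bc_empty2)
    also have "\<dots> = x C" using True by simp
    finally show ?thesis .
  qed
qed

lemma cl_mult_scal_left: "cl_mult eta n (\<lambda>A. k * x A) y = (\<lambda>C. k * cl_mult eta n x y C)"
  unfolding cl_mult_sd by (auto simp: sum_distrib_left mult_ac intro!: ext sum.cong)


lemma sd_comm: "sd A B = sd B A" by (auto simp: sd_def)

lemma grade_n_form: assumes "X \<in> cl_grade n n"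
  shows "X A = (if A = {..<n} then X {..<n} else 0)"
proof (cases "A \<subseteq> {..<n}")
  case True
  show ?thesis
  proof (cases "A = {..<n}")
    case False
    hence "card A \<noteq> n" using True card_subset_eq[of "{..<n}" A] by auto
    thus ?thesis using assms False by (simp add: cl_grade_def)
  qed simp
next
  case False thus ?thesis using assms by (auto simp: cl_grade_def cl_carrier_def)
qed

lemma grade_0_form: assumes "X \<in> cl_grade n 0"
  shows "X A = (if A = {} then X {} else 0)"
proof (cases "A \<subseteq> {..<n}")
  case True
  hence "finite A" by (rule finite_subset) simp
  thus ?thesis using assms by (cases "A = {}") (auto simp: cl_grade_def card_gt_0_iff)
next
  case False thus ?thesis using assms by (auto simp: cl_grade_def cl_carrier_def)
qed

lemma mult_pseudo_right: assumes X: "\<And>A. X A = (if A = {..<n} then c else 0)" and C: "C \<subseteq> {..<n}"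
  shows "cl_mult eta n y X C = y (sd {..<n} C) * c * blade_coeff eta (sd {..<n} C) {..<n}"
proof -
  let ?U = "{..<n}"
  have "cl_mult eta n y X C = (\<Sum>A\<in>Pow ?U. if A = sd ?U C then y A * c * blade_coeff eta A ?U else 0)"
    unfolding cl_mult_alt[OF C] X
  proof (rule sum.cong[OF refl])
    fix A
    have e: "(sd A C = ?U) = (A = sd ?U C)" by (auto simp: sd_def)
    have e2: "A = sd ?U C \<Longrightarrow> sd A C = ?U" using C by (auto simp: sd_def)
    show "y A * (if sd A C = ?U then c else 0) * blade_coeff eta A (sd A C) =
          (if A = sd ?U C then y A * c * blade_coeff eta A ?U else 0)"
      using e e2 by auto
  qed
  also have "\<dots> = y (sd ?U C) * c * blade_coeff eta (sd ?U C) ?U"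
    using sd_sub[of "?U" ?U C] C by simp
  finally show ?thesis .
qed

lemma mult_pseudo_left: assumes X: "\<And>A. X A = (if A = {..<n} then c else 0)" and C: "C \<subseteq> {..<n}"
  shows "cl_mult eta n X y C = c * y (sd {..<n} C) * blade_coeff eta {..<n} (sd {..<n} C)"
proof -
  let ?U = "{..<n}"
  have "cl_mult eta n X y C = (\<Sum>A\<in>Pow ?U. if A = ?U then c * y (sd ?U C) * blade_coeff eta ?U (sd ?U C) else 0)"
    unfolding cl_mult_alt[OF C] X
    by (rule sum.cong) auto
  also have "\<dots> = c * y (sd ?U C) * blade_coeff eta ?U (sd ?U C)"
    by simp
  finally show ?thesis .
qed

lemma mult_scalar_right: assumes X: "\<And>A. X A = (if A = {} then c else 0)" and C: "C \<subseteq> {..<n}"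
  shows "cl_mult eta n y X C = c * y C"
proof -
  let ?U = "{..<n}"
  have "cl_mult eta n y X C = (\<Sum>A\<in>Pow ?U. if A = C then c * y A else 0)"
    unfolding cl_mult_alt[OF C] X
    by (rule sum.cong) (auto simp: sd_def bc_empty2)
  also have "\<dots> = c * y C" using C by simp
  finally show ?thesis .
qed

lemma invc_swap_sum: assumes B: "B \<subseteq> {..<n}"
  shows "invc B {..<n} + invc {..<n} B = card B * (n - 1)"
proof -
  let ?U = "{..<n}"
  have fB: "finite B" using B by (rule finite_subset) simp
  define P1 where "P1 = {(a,b). a \<in> B \<and> b \<in> ?U \<and> b < a}"
  define P2 where "P2 = {(a,b). a \<in> B \<and> b \<in> ?U \<and> a < b}"
  have i2: "invc ?U B = card P2"
  proof -
    have "{(a,b). a \<in> ?U \<and> b \<in> B \<and> b < a} = prod.swap ` P2" by (auto simp: P2_def image_iff)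
    thus ?thesis unfolding invc_def by (simp add: card_image)
  qed
  have "P1 \<union> P2 = (B \<times> ?U) - (\<lambda>a. (a,a)) ` B" by (auto simp: P1_def P2_def)
  moreover have "P1 \<inter> P2 = {}" by (auto simp: P1_def P2_def)
  moreover have "finite P1" "finite P2" unfolding P1_def P2_def using fB
    by (auto intro: finite_subset[of _ "B \<times> ?U"])
  ultimately have "card P1 + card P2 = card ((B \<times> ?U) - (\<lambda>a. (a,a)) ` B)"
    by (metis card_Un_disjoint)
  also have "\<dots> = card B * n - card B"
    using fB B by (subst card_Diff_subset) (auto simp: card_cartesian_product card_image inj_on_def)
  also have "\<dots> = card B * (n - 1)" by (simp add: diff_mult_distrib2)
  finally show ?thesis using i2 by (simp add: invc_def P1_def)
qed

lemma bc_swap: assumes B: "B \<subseteq> {..<n}"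
  shows "blade_coeff eta B {..<n} = (-1) ^ (card B * (n - 1)) * blade_coeff eta {..<n} B"
proof -
  let ?U = "{..<n}"
  have ex: "card B * (n - 1) + invc ?U B = invc B ?U + 2 * invc ?U B"
    using invc_swap_sum[OF B] by arith
  have "(-1::'a) ^ (card B * (n - 1)) * (-1) ^ invc ?U B = (-1) ^ (invc B ?U + 2 * invc ?U B)"
    by (simp only: power_add[symmetric] ex)
  also have "\<dots> = (-1) ^ invc B ?U" by (simp add: power_add power_mult)
  finally show ?thesis by (simp add: bc_def2 Int_commute mult.assoc)
qed

lemma bc_nz: assumes "\<And>i. eta i \<noteq> 0" "finite A"
  shows "blade_coeff eta A B \<noteq> 0"
  using assms by (simp add: blade_coeff_def)


lemma one_carrier: "cl_one \<in> cl_carrier n" by (auto simp: cl_carrier_def cl_one_def)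

lemma conj_n: fixes eta :: "nat \<Rightarrow> 'a::field" and k :: 'a
  assumes T: "T \<in> cl_carrier n" and inv: "cl_is_inverse eta n T S"
  and X: "X \<in> cl_grade n n"
  and sgn: "\<And>B. B \<subseteq> {..<n} \<Longrightarrow> T B \<noteq> 0 \<Longrightarrow> (-1) ^ (card B * (n - 1)) = k"
  shows "cl_mult eta n (cl_mult eta n T X) S \<in> cl_grade n n"
proof -
  let ?U = "{..<n}"
  define c where "c = X ?U"
  have Xf: "\<And>A. X A = (if A = ?U then c else 0)" unfolding c_def by (rule grade_n_form[OF X])
  have Xc: "X \<in> cl_carrier n" using X by (simp add: cl_grade_def)
  have TX: "cl_mult eta n T X = (\<lambda>C. k * cl_mult eta n X T C)"
  proof (rule ext)
    fix C show "cl_mult eta n T X C = k * cl_mult eta n X T C"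
    proof (cases "C \<subseteq> ?U")
      case False thus ?thesis by (simp add: cl_mult_out)
    next
      case CU: True
      define B where "B = sd ?U C"
      have B: "B \<subseteq> ?U" unfolding B_def by (rule sd_sub) (use CU in auto)
      have r: "cl_mult eta n T X C = T B * c * blade_coeff eta B ?U"
        using mult_pseudo_right[OF Xf CU, of eta T] unfolding B_def .
      have l: "cl_mult eta n X T C = c * T B * blade_coeff eta ?U B"
        using mult_pseudo_left[OF Xf CU, of eta T] unfolding B_def .
      show ?thesis
      proof (cases "T B = 0")
        case True
        thus ?thesis unfolding r l by simp
      next
        case False
        have "blade_coeff eta B ?U = k * blade_coeff eta ?U B"
          using bc_swap[OF B, of eta] sgn[OF B False] by simp
        thus ?thesis unfolding r l by (simp add: mult_ac)
      qed
    qed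
  qed
  have "cl_mult eta n (cl_mult eta n T X) S = (\<lambda>C. k * cl_mult eta n (cl_mult eta n X T) S C)"
    by (simp add: TX cl_mult_scal_left)
  also have "\<dots> = (\<lambda>C. k * X C)"
    using inv by (simp add: cl_mult_assoc[symmetric] cl_is_inverse_def cl_mult_one_right[OF Xc])
  finally show ?thesis using X by (auto simp: cl_grade_def cl_carrier_def)
qed

lemma conj_0: assumes T: "T \<in> cl_carrier n" and inv: "cl_is_inverse eta n T S"
  and X: "X \<in> cl_grade n 0"
  shows "cl_mult eta n (cl_mult eta n T X) S \<in> cl_grade n 0"
proof -
  have Xf: "\<And>A. X A = (if A = {} then X {} else 0)" by (rule grade_0_form[OF X])
  have TX: "cl_mult eta n T X = (\<lambda>C. X {} * T C)"
  proof (rule ext)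
    fix C show "cl_mult eta n T X C = X {} * T C"
      using T by (cases "C \<subseteq> {..<n}") (auto simp: cl_mult_out mult_scalar_right[OF Xf] cl_carrier_def)
  qed
  have "cl_mult eta n (cl_mult eta n T X) S = (\<lambda>C. X {} * cl_one C)"
    using inv by (simp add: TX cl_mult_scal_left cl_is_inverse_def)
  thus ?thesis by (auto simp: cl_grade_def cl_carrier_def cl_one_def)
qed

lemma Gamma_all: assumes "\<And>T S X. T \<in> cl_carrier n \<Longrightarrow> cl_is_inverse eta n T S \<Longrightarrow> X \<in> cl_grade n k \<Longrightarrow>
     cl_mult eta n (cl_mult eta n T X) S \<in> cl_grade n k"
  shows "cl_Gamma eta n k = cl_units eta n (cl_carrier n)"
proof
  show "cl_Gamma eta n k \<subseteq> cl_units eta n (cl_carrier n)" unfolding cl_Gamma_def by blast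
  show "cl_units eta n (cl_carrier n) \<subseteq> cl_Gamma eta n k"
  proof
    fix T assume T: "T \<in> cl_units eta n (cl_carrier n)"
    hence "T \<in> cl_carrier n" by (simp add: cl_units_def)
    thus "T \<in> cl_Gamma eta n k" using T unfolding cl_Gamma_def
      by (simp add: assms)
  qed
qed

lemma Gamma0: "cl_Gamma eta n 0 = cl_units eta n (cl_carrier n)"
  by (rule Gamma_all) (rule conj_0)

lemma Gamma_odd: assumes "odd n" shows "cl_Gamma eta n n = cl_units eta n (cl_carrier n)"
proof -
  have "\<And>B::nat set. (-1::'a) ^ (card B * (n - 1)) = 1"
  proof -
    fix B :: "nat set" have "even (card B * (n - 1))" using assms by auto
    thus "(-1::'a) ^ (card B * (n - 1)) = 1" by (rule neg_one_even_power)
  qed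
  have "\<And>T S X. T \<in> cl_carrier n \<Longrightarrow> cl_is_inverse eta n T S \<Longrightarrow> X \<in> cl_grade n n \<Longrightarrow>
     cl_mult eta n (cl_mult eta n T X) S \<in> cl_grade n n"
    by (rule conj_n[where k = 1]) (use \<open>\<And>B::nat set. (-1::'a) ^ (card B * (n - 1)) = 1\<close> in auto)
  thus ?thesis by (rule Gamma_all)
qed


lemma Gamma_even:
  fixes eta :: "nat \<Rightarrow> 'a::field_char_0"
  assumes ev: "even n" and n0: "0 < n" and nz: "\<And>i. eta i \<noteq> 0"
  shows "cl_Gamma eta n n = cl_units eta n (cl_even n) \<union> cl_units eta n (cl_odd n)"
proof
  let ?U = "{..<n}"
  have pw: "\<And>B::nat set. (-1::'a) ^ (card B * (n - 1)) = (if even (card B) then 1 else -1)"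
  proof -
    fix B :: "nat set"
    have "odd (n - 1)" using ev n0 by (cases n) auto
    thus "(-1::'a) ^ (card B * (n - 1)) = (if even (card B) then 1 else -1)"
      by (auto simp: power_mult neg_one_even_power neg_one_odd_power)
  qed
  show "cl_units eta n (cl_even n) \<union> cl_units eta n (cl_odd n) \<subseteq> cl_Gamma eta n n"
  proof
    fix T assume "T \<in> cl_units eta n (cl_even n) \<union> cl_units eta n (cl_odd n)"
    then consider (E) "T \<in> cl_even n" "\<exists>y. cl_is_inverse eta n T y"
      | (O) "T \<in> cl_odd n" "\<exists>y. cl_is_inverse eta n T y" by (auto simp: cl_units_def)
    thus "T \<in> cl_Gamma eta n n"
    proof cases
      case E
      hence Tc: "T \<in> cl_carrier n" by (simp add: cl_even_def)
      have "\<And>B. B \<subseteq> ?U \<Longrightarrow> T B \<noteq> 0 \<Longrightarrow> (-1::'a) ^ (card B * (n - 1)) = 1"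
        using E(1) pw by (auto simp: cl_even_def)
      hence "\<And>S X. cl_is_inverse eta n T S \<Longrightarrow> X \<in> cl_grade n n \<Longrightarrow>
          cl_mult eta n (cl_mult eta n T X) S \<in> cl_grade n n"
        using conj_n[OF Tc, of eta] by blast
      thus ?thesis using Tc E(2) by (simp add: cl_Gamma_def cl_units_def)
    next
      case O
      hence Tc: "T \<in> cl_carrier n" by (simp add: cl_odd_def)
      have "\<And>B. B \<subseteq> ?U \<Longrightarrow> T B \<noteq> 0 \<Longrightarrow> (-1::'a) ^ (card B * (n - 1)) = -1"
        using O(1) pw by (auto simp: cl_odd_def)
      hence "\<And>S X. cl_is_inverse eta n T S \<Longrightarrow> X \<in> cl_grade n n \<Longrightarrow>
          cl_mult eta n (cl_mult eta n T X) S \<in> cl_grade n n"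
        using conj_n[OF Tc, of eta] by blast
      thus ?thesis using Tc O(2) by (simp add: cl_Gamma_def cl_units_def)
    qed
  qed
  show "cl_Gamma eta n n \<subseteq> cl_units eta n (cl_even n) \<union> cl_units eta n (cl_odd n)"
  proof
    fix T assume TG: "T \<in> cl_Gamma eta n n"
    hence Tc: "T \<in> cl_carrier n" and "\<exists>S. cl_is_inverse eta n T S"
      by (auto simp: cl_Gamma_def cl_units_def)
    then obtain S where inv: "cl_is_inverse eta n T S" by blast
    define I :: "nat set \<Rightarrow> 'a" where "I = (\<lambda>A. if A = ?U then 1 else 0)"
    have If: "\<And>A. I A = (if A = ?U then 1 else 0)" by (simp add: I_def)
    have Ig: "I \<in> cl_grade n n" by (auto simp: I_def cl_grade_def cl_carrier_def)
    define W where "W = cl_mult eta n (cl_mult eta n T I) S"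
    have Wg: "W \<in> cl_grade n n" using TG inv Ig by (auto simp: cl_Gamma_def W_def)
    define d where "d = W ?U"
    have Wf: "\<And>A. W A = (if A = ?U then d else 0)" unfolding d_def by (rule grade_n_form[OF Wg])
    have "cl_mult eta n T I = cl_mult eta n (cl_mult eta n T I) cl_one"
      by (rule cl_mult_one_right[symmetric, OF cl_mult_carrier])
    also have "\<dots> = cl_mult eta n (cl_mult eta n T I) (cl_mult eta n S T)"
      using inv by (simp add: cl_is_inverse_def)
    also have "\<dots> = cl_mult eta n W T" by (simp add: W_def cl_mult_assoc)
    finally have TI: "cl_mult eta n T I = cl_mult eta n W T" .
    have key: "\<And>B. T B \<noteq> 0 \<Longrightarrow> d = (if even (card B) then 1 else -1)"
    proof -
      fix B assume TB: "T B \<noteq> 0"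
      hence B: "B \<subseteq> ?U" using Tc by (auto simp: cl_carrier_def)
      define C where "C = sd ?U B"
      have CU: "C \<subseteq> ?U" unfolding C_def by (rule sd_sub) (use B in auto)
      have BC: "sd ?U C = B" unfolding C_def by (rule sd_sd)
      have r: "cl_mult eta n T I C = T B * 1 * blade_coeff eta B ?U"
        using mult_pseudo_right[OF If CU, of eta T] unfolding BC .
      have l: "cl_mult eta n W T C = d * T B * blade_coeff eta ?U B"
        using mult_pseudo_left[OF Wf CU, of eta T] unfolding BC .
      have fU: "finite ?U" by simp
      have bnz: "blade_coeff eta ?U B \<noteq> 0" by (rule bc_nz[OF nz fU])
      have "T B * ((if even (card B) then 1 else -1) * blade_coeff eta ?U B) = T B * 1 * blade_coeff eta B ?U"
        using bc_swap[OF B, of eta] pw[of B] by simp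
      also have "\<dots> = cl_mult eta n T I C" using r by simp
      also have "\<dots> = cl_mult eta n W T C" using TI by simp
      also have "\<dots> = T B * (d * blade_coeff eta ?U B)" using l by (simp add: mult_ac)
      finally have "T B * ((if even (card B) then 1 else -1) * blade_coeff eta ?U B) = T B * (d * blade_coeff eta ?U B)" .
      hence "(if even (card B) then 1 else -1) * blade_coeff eta ?U B = d * blade_coeff eta ?U B"
        using TB by simp
      thus "d = (if even (card B) then 1 else -1)" using bnz by simp
    qed
    show "T \<in> cl_units eta n (cl_even n) \<union> cl_units eta n (cl_odd n)"
    proof (cases "\<forall>B. T B \<noteq> 0 \<longrightarrow> even (card B)")
      case True
      hence "T \<in> cl_even n" using Tc by (auto simp: cl_even_def)
      thus ?thesis using inv by (auto simp: cl_units_def)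
    next
      case False
      then obtain B0 where B0: "T B0 \<noteq> 0" "odd (card B0)" by auto
      hence dm: "d = -1" using key by simp
      have "\<forall>B. T B \<noteq> 0 \<longrightarrow> odd (card B)"
      proof (intro allI impI)
        fix B assume "T B \<noteq> 0"
        from key[OF this] dm show "odd (card B)" by (auto split: if_splits)
      qed
      hence "T \<in> cl_odd n" using Tc by (auto simp: cl_odd_def)
      thus ?thesis using inv by (auto simp: cl_units_def)
    qed
  qed
qed

theorem mainTheorem1:
  fixes n :: nat
  assumes "n \<ge> 2"
  shows "(\<forall>p q. p + q = n \<longrightarrow>
            cl_Gamma (eta_real p) n 0 = cl_units (eta_real p) n (cl_carrier n) \<and>
            cl_Gamma (eta_real p) n n =
              (if odd n then cl_units (eta_real p) n (cl_carrier n)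
               else cl_units (eta_real p) n (cl_even n) \<union> cl_units (eta_real p) n (cl_odd n)))
       \<and> (cl_Gamma eta_complex n 0 = cl_units eta_complex n (cl_carrier n) \<and>
            cl_Gamma eta_complex n n =
              (if odd n then cl_units eta_complex n (cl_carrier n)
               else cl_units eta_complex n (cl_even n) \<union> cl_units eta_complex n (cl_odd n)))"
proof -
  have n0: "0 < n" using assms by simp
  have A: "cl_Gamma (eta_real p) n 0 = cl_units (eta_real p) n (cl_carrier n) \<and>
            cl_Gamma (eta_real p) n n =
              (if odd n then cl_units (eta_real p) n (cl_carrier n)
               else cl_units (eta_real p) n (cl_even n) \<union> cl_units (eta_real p) n (cl_odd n))" for p
  proof -
    have nz: "\<And>i. eta_real p i \<noteq> 0" by (simp add: eta_real_def)
    have "even n \<Longrightarrow> cl_Gamma (eta_real p) n n = cl_units (eta_real p) n (cl_even n) \<union> cl_units (eta_real p) n (cl_odd n)"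
      by (rule Gamma_even[OF _ n0 nz])
    thus ?thesis using Gamma0[of "eta_real p" n] Gamma_odd[of n "eta_real p"] by simp
  qed
  have nz: "\<And>i. eta_complex i \<noteq> 0" by (simp add: eta_complex_def)
  have "even n \<Longrightarrow> cl_Gamma eta_complex n n = cl_units eta_complex n (cl_even n) \<union> cl_units eta_complex n (cl_odd n)"
    by (rule Gamma_even[OF _ n0 nz])
  thus ?thesis using A Gamma0[of eta_complex n] Gamma_odd[of n eta_complex] by simp
qed

end
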